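(* For every $\Lambda>0$ there exists a smooth, positive, $\pi$-periodic function $f:\mathbb R\to(0,\infty)$ such that \[\int_0^{2\pi}\big|\partial_\theta\log f(\theta+\tfrac\pi2)-\partial_\theta\log f(\theta)\big|^2\big(f(\theta+\tfrac\pi2)+f(\theta)\big)d\theta<\Lambda\int_0^{2\pi}\frac{(f(\theta+\frac\pi2)-f(\theta))^2}{f(\theta+\frac\pi2)+f(\theta)}\,d\theta.\] *)

theory Defs
  imports "HOL-Analysis.Analysis"
begin

definition smooth_real :: "(real \<Rightarrow> real) \<Rightarrow> bool" where
  "smooth_real f \<longleftrightarrow> (\<forall>k::nat. \<forall>x. ((deriv ^^ k) f) differentiable (at x))"

end

theory Submission
  imports Defs
begin

inductive_set SC :: "(real \<Rightarrow> real) set" where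
  sc_const: "(\<lambda>x. c) \<in> SC"
| sc_sin: "(\<lambda>x. sin (a*x)) \<in> SC"
| sc_cos: "(\<lambda>x. cos (a*x)) \<in> SC"
| sc_add: "f \<in> SC \<Longrightarrow> g \<in> SC \<Longrightarrow> (\<lambda>x. f x + g x) \<in> SC"
| sc_mult: "f \<in> SC \<Longrightarrow> g \<in> SC \<Longrightarrow> (\<lambda>x. f x * g x) \<in> SC"
| sc_exp: "f \<in> SC \<Longrightarrow> (\<lambda>x. exp (f x)) \<in> SC"

lemma SC_deriv_ex: "g \<in> SC \<Longrightarrow> \<exists>g'\<in>SC. \<forall>x. (g has_real_derivative g' x) (at x)"
proof (induction rule: SC.induct)
  case (sc_const c)
  show ?case by (rule bexI[of _ "\<lambda>x. 0"]) (auto intro: SC.intros)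
next
  case (sc_sin a)
  show ?case
    by (rule bexI[of _ "\<lambda>x. a * cos (a*x)"])
       (auto intro!: SC.intros derivative_eq_intros)
next
  case (sc_cos a)
  have m: "(\<lambda>x. (- a) * sin (a*x)) \<in> SC" by (intro SC.intros)
  have d: "\<forall>x. ((\<lambda>x. cos (a*x)) has_real_derivative (- a) * sin (a*x)) (at x)"
    by (auto intro!: derivative_eq_intros)
  show ?case by (rule bexI[OF _ m]) (rule d)
next
  case (sc_add f g)
  then obtain f' g' where "f' \<in> SC" "g' \<in> SC" "\<forall>x. (f has_real_derivative f' x) (at x)"
    "\<forall>x. (g has_real_derivative g' x) (at x)" by blast
  then show ?case
    by (intro bexI[of _ "\<lambda>x. f' x + g' x"]) (auto intro!: SC.intros derivative_eq_intros)
next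
  case (sc_mult f g)
  then obtain f' g' where "f' \<in> SC" "g' \<in> SC" "\<forall>x. (f has_real_derivative f' x) (at x)"
    "\<forall>x. (g has_real_derivative g' x) (at x)" by blast
  then show ?case
    by (intro bexI[of _ "\<lambda>x. f' x * g x + f x * g' x"])
       (auto intro!: SC.intros derivative_eq_intros sc_mult)
next
  case (sc_exp f)
  then obtain f' where "f' \<in> SC" "\<forall>x. (f has_real_derivative f' x) (at x)" by blast
  then show ?case
    by (intro bexI[of _ "\<lambda>x. exp (f x) * f' x"])
       (auto intro!: SC.intros derivative_eq_intros sc_exp)
qed

lemma SC_deriv: "g \<in> SC \<Longrightarrow> deriv g \<in> SC"
proof -
  assume "g \<in> SC"
  then obtain g' where "g' \<in> SC" "\<forall>x. (g has_real_derivative g' x) (at x)"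
    using SC_deriv_ex by blast
  moreover have "deriv g = g'" using calculation by (auto intro!: ext DERIV_imp_deriv)
  ultimately show ?thesis by simp
qed

lemma SC_differentiable: "g \<in> SC \<Longrightarrow> g differentiable (at x)"
  using SC_deriv_ex real_differentiable_def by blast

lemma SC_smooth: "g \<in> SC \<Longrightarrow> smooth_real g"
proof -
  assume g: "g \<in> SC"
  have "(deriv ^^ k) g \<in> SC" for k
    by (induction k) (auto simp: g SC_deriv)
  then show ?thesis unfolding smooth_real_def using SC_differentiable by blast
qed

lemma f_SC: "(\<lambda>t. exp (M * cos (4*t)) * (2 + cos (2*t))) \<in> SC"
  by (intro SC.intros)

lemma poly_ineq:
  fixes L x :: real
  assumes L: "L > 0" and x: "-1 \<le> x" "x \<le> 1"
  defines "q \<equiv> L/24 + 12 - 12*x"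
  shows "48*(1-x) + L/12 \<le> (L/6)*(1+x) - 48*(1-x^2) - 4*x*q + 4*(576/L)*q*(1-x^2)"
proof -
  have "(L/6)*(1+x) - 48*(1-x^2) - 4*x*q + 4*(576/L)*q*(1-x^2) - (48*(1-x) + L/12)
        = L/12 + (27648/L)*(1-x)^2*(1+x)"
    using L unfolding q_def by (simp add: field_simps power2_eq_square)
  moreover have "L/12 + (27648/L)*(1-x)^2*(1+x) \<ge> 0" using L x by auto
  ultimately have "(L/6)*(1+x) - 48*(1-x^2) - 4*x*q + 4*(576/L)*q*(1-x^2) - (48*(1-x) + L/12) \<ge> 0"
    by metis
  then show ?thesis by (simp only: diff_ge_0_iff_ge)
qed

lemma pointwise:
  fixes L \<theta> :: real
  assumes L: "L > 0"
  defines "M \<equiv> 576/L"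
  defines "E \<equiv> exp (M * cos (4*\<theta>))"
  defines "q \<equiv> L/24 + 12 - 12*cos (4*\<theta>)"
  shows "(2* sin(2*\<theta>)/(2 - cos(2*\<theta>)) + 2* sin(2*\<theta>)/(2 + cos(2*\<theta>)))^2
           * (E*(2 - cos(2*\<theta>)) + E*(2 + cos(2*\<theta>))) + L/12*exp(-M)
         \<le> L/2 * ((E*(2 - cos(2*\<theta>)) - E*(2 + cos(2*\<theta>)))^2
                   / (E*(2 - cos(2*\<theta>)) + E*(2 + cos(2*\<theta>))))
           + E * (- 48*(sin(4*\<theta>))^2 - 4*cos(4*\<theta>)*q + 4*M*q*(sin(4*\<theta>))^2)"
proof -
  define x where "x = cos (4*\<theta>)"
  define C where "C = cos (2*\<theta>)"
  define S where "S = sin (2*\<theta>)"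
  have E0: "E > 0" unfolding E_def by simp
  have x1: "x = 1 - 2*S^2" unfolding x_def S_def
    using cos_double_sin[of "2*\<theta>"] by (simp add: mult.assoc)
  have x2: "C^2 = (1+x)/2" unfolding x_def C_def
    using cos_double_cos[of "2*\<theta>"] by (simp add: mult.assoc)
  have s2: "(sin(4*\<theta>))^2 = 1 - x^2" unfolding x_def by (simp add: sin_squared_eq)
  have xb: "-1 \<le> x" "x \<le> 1" unfolding x_def by auto
  have Cb: "-1 \<le> C" "C \<le> 1" unfolding C_def by auto
  have "C^2 \<le> 1" using x2 xb by auto
  then have c4: "4 - C^2 \<ge> 3" by linarith
  have eq1: "2*S/(2 - C) + 2*S/(2 + C) = 8*S/(4 - C^2)"
    using Cb by (simp add: field_simps power2_eq_square)
  have A1: "(8*S/(4 - C^2))^2 \<le> 64*S^2/9"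
  proof -
    have "(8*S/(4 - C^2))^2 = 64*S^2/(4-C^2)^2" by (simp add: power_divide power_mult_distrib)
    also have "\<dots> \<le> 64*S^2/9"
    proof (rule divide_left_mono)
      have "3*3 \<le> (4-C^2)*(4-C^2)" using c4 by (intro mult_mono) auto
      then show "9 \<le> (4-C^2)^2" by (simp add: power2_eq_square)
    qed (use c4 in auto)
    finally show ?thesis .
  qed
  have A: "(2*S/(2 - C) + 2*S/(2 + C))^2 * (E*(2 - C) + E*(2 + C)) \<le> 48*(1-x)*E"
  proof -
    have "(2*S/(2 - C) + 2*S/(2 + C))^2 * (E*(2 - C) + E*(2 + C)) = (8*S/(4 - C^2))^2 * (4*E)"
      unfolding eq1 by (simp add: algebra_simps)
    also have "\<dots> \<le> 64*S^2/9 * (4*E)" using A1 E0 by (intro mult_right_mono) auto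
    also have "\<dots> = (256/9)*(S^2*E)" by simp
    also have "\<dots> \<le> 96*(S^2*E)" using E0 by (intro mult_right_mono) auto
    also have "\<dots> = 48*(1-x)*E" using x1 by simp
    finally show ?thesis .
  qed
  have B: "(E*(2 - C) - E*(2 + C))^2 / (E*(2 - C) + E*(2 + C)) = (1+x)/2 * E"
  proof -
    have "(E*(2 - C) - E*(2 + C))^2 / (E*(2 - C) + E*(2 + C)) = C^2 * E"
      using E0 by (simp add: field_simps power2_eq_square)
    then show ?thesis using x2 by simp
  qed
  have c: "L/12*exp(-M) \<le> L/12 * E"
  proof -
    have "-M \<le> M * x" using xb L unfolding M_def by (simp add: field_simps)
    then have "exp(-M) \<le> E" unfolding E_def x_def by simp
    then show ?thesis using L by simp
  qed
  have P: "48*(1-x) + L/12 \<le> (L/6)*(1+x) - 48*(1-x^2) - 4*x*q + 4*M*q*(1-x^2)"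
    using poly_ineq[OF L xb] unfolding q_def x_def M_def by simp
  have P2: "(48*(1-x) + L/12)*E \<le> ((L/6)*(1+x) - 48*(1-x^2) - 4*x*q + 4*M*q*(1-x^2))*E"
    using P E0 by (intro mult_right_mono) auto
  have P3: "48*(1-x)*E + L/12*E \<le> (L/6)*(1+x)*E + E*(-48*(1-x^2) - 4*x*q + 4*M*q*(1-x^2))"
    using P2 by (simp add: algebra_simps)
  have nn: "(L/6)*(1+x)*E \<le> L/2*((1+x)/2*E)"
  proof -
    have "0 \<le> (L/12)*((1+x)*E)" using L xb E0 by auto
    then show ?thesis by (simp add: algebra_simps)
  qed
  have main: "(2*S/(2 - C) + 2*S/(2 + C))^2 * (E*(2 - C) + E*(2 + C)) + L/12*exp(-M)
     \<le> L/2*((1+x)/2*E) + E*(-48*(1-x^2) - 4*x*q + 4*M*q*(1-x^2))"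
    using A c P3 nn by linarith
  show ?thesis
    unfolding C_def[symmetric] S_def[symmetric] x_def[symmetric] B s2
    by (rule main)
qed

theorem lemma8p1:
  fixes \<Lambda> :: real
  assumes "\<Lambda> > 0"
  shows "\<exists>f :: real \<Rightarrow> real.
           smooth_real f \<and> (\<forall>x. f x > 0) \<and> (\<forall>x. f (x + pi) = f x) \<and>
           integral {0..2*pi}
             (\<lambda>\<theta>. (deriv (\<lambda>t. ln (f t)) (\<theta> + pi/2) - deriv (\<lambda>t. ln (f t)) \<theta>)\<^sup>2
                   * (f (\<theta> + pi/2) + f \<theta>))
           < \<Lambda> * integral {0..2*pi}
             (\<lambda>\<theta>. (f (\<theta> + pi/2) - f \<theta>)\<^sup>2 / (f (\<theta> + pi/2) + f \<theta>))"
proof -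
  define L where "L = \<Lambda>"
  have L: "L > 0" using assms L_def by simp
  define M where "M = 576/L"
  define f where "f = (\<lambda>t::real. exp (M * cos (4*t)) * (2 + cos (2*t)))"
  define Df where "Df = (\<lambda>t::real. - 4*M * sin (4*t) - 2 * sin (2*t) / (2 + cos (2*t)))"
  define q where "q = (\<lambda>t::real. L/24 + 12 - 12*cos (4*t))"
  define Gf where "Gf = (\<lambda>t::real. - q t * sin (4*t) * exp (M * cos (4*t)))"
  define Gd where "Gd = (\<lambda>t::real. exp (M * cos (4*t)) *
      (- 48*(sin(4*t))^2 - 4*cos(4*t)*q t + 4*M*q t*(sin(4*t))^2))"
  define c where "c = L/12*exp(-M)"
  have cpos: "c > 0" using L unfolding c_def by simp
  have cosp: "2 + cos y > 0" "2 - cos y > 0" for y :: real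
    using cos_ge_minus_one[of y] cos_le_one[of y] by linarith+
  have smooth: "smooth_real f" unfolding f_def by (rule SC_smooth[OF f_SC])
  have fpos: "\<forall>x. f x > 0" unfolding f_def using cosp by simp
  have fper: "\<forall>x. f (x + pi) = f x"
  proof
    fix x :: real
    have "4*(x+pi) = (4*x + 2*pi) + 2*pi" "2*(x+pi) = 2*x + 2*pi" by (simp_all add: algebra_simps)
    then show "f (x + pi) = f x" unfolding f_def by (simp only: cos_periodic)
  qed
  have lnf: "(\<lambda>t. ln (f t)) = (\<lambda>t. M * cos (4*t) + ln (2 + cos (2*t)))"
  proof
    fix t :: real
    have "ln (f t) = ln (exp (M * cos (4*t))) + ln (2 + cos (2*t))"
      unfolding f_def using cosp[of "2*t"] by (simp add: ln_mult)
    then show "ln (f t) = M * cos (4*t) + ln (2 + cos (2*t))" by simp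
  qed
  have D: "deriv (\<lambda>t. ln (f t)) = Df"
  proof
    fix t :: real
    have "((\<lambda>t. M * cos (4*t) + ln (2 + cos (2*t))) has_real_derivative Df t) (at t)"
      unfolding Df_def using cosp[of "2*t"]
      by (auto intro!: derivative_eq_intros simp: field_simps)
    then show "deriv (\<lambda>t. ln (f t)) t = Df t" unfolding lnf by (rule DERIV_imp_deriv)
  qed
  define A where "A = (\<lambda>\<theta>. (Df (\<theta> + pi/2) - Df \<theta>)\<^sup>2 * (f (\<theta> + pi/2) + f \<theta>))"
  define B where "B = (\<lambda>\<theta>. (f (\<theta> + pi/2) - f \<theta>)\<^sup>2 / (f (\<theta> + pi/2) + f \<theta>))"
  have shift: "sin (4*(t + pi/2)) = sin (4*t)" "cos (4*(t + pi/2)) = cos (4*t)"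
     "sin (2*(t + pi/2)) = - sin (2*t)" "cos (2*(t + pi/2)) = - cos (2*t)" for t :: real
  proof -
    have "4*(t+pi/2) = 4*t + 2*pi" "2*(t+pi/2) = 2*t + pi" by (simp_all add: algebra_simps)
    then show "sin (4*(t + pi/2)) = sin (4*t)" "cos (4*(t + pi/2)) = cos (4*t)"
     "sin (2*(t + pi/2)) = - sin (2*t)" "cos (2*(t + pi/2)) = - cos (2*t)"
      by (simp_all only: sin_periodic cos_periodic sin_periodic_pi cos_periodic_pi)
  qed
  have pw: "A t + c \<le> L/2 * B t + Gd t" for t
  proof -
    have e1: "Df (t + pi/2) - Df t = 2 * sin(2*t)/(2 - cos(2*t)) + 2 * sin(2*t)/(2 + cos(2*t))"
      unfolding Df_def shift by (simp add: algebra_simps)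
    have e2: "f (t + pi/2) = exp (M * cos (4*t)) * (2 - cos (2*t))"
      "f t = exp (M * cos (4*t)) * (2 + cos (2*t))"
      unfolding f_def shift by simp_all
    show ?thesis
      unfolding A_def B_def e1 e2 Gd_def c_def q_def M_def
      using pointwise[OF L, of t] by simp
  qed
  have cf: "continuous_on UNIV f" unfolding f_def by (intro continuous_intros)
  have cDf: "continuous_on UNIV Df"
  proof -
    have "\<And>x::real. 2 + cos (2*x) \<noteq> 0" using cosp by (metis less_irrefl)
    then show ?thesis unfolding Df_def by (intro continuous_intros) auto
  qed
  have cfs: "continuous_on UNIV (\<lambda>t. f (t + pi/2))"
    by (rule continuous_on_compose2[OF cf]) (auto intro!: continuous_intros)
  have cDfs: "continuous_on UNIV (\<lambda>t. Df (t + pi/2))"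
    by (rule continuous_on_compose2[OF cDf]) (auto intro!: continuous_intros)
  have contA: "continuous_on {0..2*pi} A"
  proof -
    have "continuous_on UNIV A" unfolding A_def by (intro continuous_intros cf cDf cfs cDfs)
    then show ?thesis by (rule continuous_on_subset) simp
  qed
  have contB: "continuous_on {0..2*pi} B"
  proof -
    have "f (t + pi/2) + f t > 0" for t using fpos by (simp add: add_pos_pos)
    then have "\<And>t. f (t + pi/2) + f t \<noteq> 0" by (metis less_irrefl)
    then have "continuous_on UNIV B" unfolding B_def by (intro continuous_intros cf cfs) auto
    then show ?thesis by (rule continuous_on_subset) simp
  qed
  obtain IA where hA: "(A has_integral IA) {0..2*pi}"
    using integrable_continuous_interval[OF contA] by blast
  obtain IB where hB: "(B has_integral IB) {0..2*pi}"
    using integrable_continuous_interval[OF contB] by blast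
  have hG: "(Gd has_integral (Gf (2*pi) - Gf 0)) {0..2*pi}"
  proof (rule fundamental_theorem_of_calculus)
    show "0 \<le> 2*pi" by simp
    fix x assume "x \<in> {0..2*pi}"
    have "(Gf has_real_derivative Gd x) (at x)"
      unfolding Gf_def Gd_def q_def
      by (auto intro!: derivative_eq_intros simp: power2_eq_square) (simp add: algebra_simps)
    then show "(Gf has_vector_derivative Gd x) (at x within {0..2*pi})"
      by (simp add: has_real_derivative_iff_has_vector_derivative has_vector_derivative_at_within)
  qed
  have G0: "Gf (2*pi) - Gf 0 = 0"
  proof -
    have "sin (4*(2*pi)) = 0" using sin_npi2_numeral[of "Num.Bit0 (Num.Bit0 (Num.Bit0 Num.One))"]
      by (simp add: mult.commute)
    then show ?thesis unfolding Gf_def by simp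
  qed
  have hc: "((\<lambda>_. c) has_integral (2*pi*c)) {0..2*pi}"
    using has_integral_const_real[of c 0 "2*pi"] by simp
  have hR: "((\<lambda>t. L/2 * B t + Gd t - c) has_integral (L/2*IB + 0 - 2*pi*c)) {0..2*pi}"
    using hG[unfolded G0]
    by (intro has_integral_diff has_integral_add has_integral_mult_right hB hc)
  have le: "IA \<le> L/2*IB + 0 - 2*pi*c"
    by (rule has_integral_le[OF hA hR]) (use pw in \<open>auto simp: algebra_simps\<close>)
  have IBnn: "0 \<le> IB"
  proof (rule has_integral_nonneg[OF hB])
    fix t
    have "f (t + pi/2) + f t > 0" using fpos by (simp add: add_pos_pos)
    then show "0 \<le> B t" unfolding B_def by simp
  qed
  have "0 \<le> L*IB" using L IBnn by simp
  moreover have "0 < 2*pi*c" using cpos by simp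
  ultimately have "IA < L * IB" using le by linarith
  moreover have "integral {0..2*pi} A = IA" using hA by (rule integral_unique)
  moreover have "integral {0..2*pi} B = IB" using hB by (rule integral_unique)
  ultimately have final: "integral {0..2*pi} A < \<Lambda> * integral {0..2*pi} B"
    unfolding L_def by simp
  show ?thesis
    unfolding D
    by (rule exI[of _ f]) (use smooth fpos fper final in \<open>simp add: A_def B_def D\<close>)
qed

end
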